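(* Let $K\in\mathbb R^{m\times p}$, $h\in\mathbb R^p$, $x^*\ge0$, and $y\sim\mathcal N(Kx^*,I_m)$. The Rust–Burrus interval satisfies $\mathbb P(h^\top x^*\in I_{\mathrm{RB}}(y))\ge1-\alpha$ for every $\alpha\in(0,1)$ if and only if a $\chi^2_1$ random variable stochastically dominates $$\lambda(h^\top x^*,y)=\min_{h^\top x=h^\top x^*,\ x\ge0}\|y-Kx\|_2^2-\min_{x\ge0}\|y-Kx\|_2^2 .$$
   Context: The Rust–Burrus interval is $I_{\mathrm{RB}}(y)=[\min h^\top x,\max h^\top x]$ over $\{x\ge0:\|y-Kx\|_2^2\le z_{\alpha/2}^2+s^2(y)\}$ with $s^2(y)=\min_{x\ge0}\|y-Kx\|_2^2$, where $\mathbb P(N>z_{\alpha/2})=\alpha/2$ for $N\sim\mathcal N(0,1)$; vector inequalities are componentwise. A real random variable $X$ stochastically dominates $Y$ if $\mathbb P(X>z)\ge\mathbb P(Y>z)$ for all $z\in\mathbb R$. $\chi^2_1$ is the chi-squared distribution with one degree of freedom. *)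

theory Defs
  imports "HOL-Probability.Probability"
begin

definition std_normal :: "real measure" where
  "std_normal = density lborel (\<lambda>x. ennreal (std_normal_density x))"

definition gaussian_id :: "real ^ 'm \<Rightarrow> (real ^ 'm) measure" where
  "gaussian_id mu = density lborel
     (\<lambda>y. ennreal (\<Prod>i\<in>UNIV. std_normal_density (y $ i - mu $ i)))"

definition chi_sq_1 :: "real measure" where
  "chi_sq_1 = distr std_normal borel (\<lambda>x. x\<^sup>2)"

definition z_upper :: "real \<Rightarrow> real" where
  "z_upper a = (THE z. measure std_normal {z<..} = a)"

definition nonneg :: "real ^ 'p \<Rightarrow> bool" where
  "nonneg x \<longleftrightarrow> (\<forall>i. 0 \<le> x $ i)"

definition s2 :: "real ^ 'p ^ 'm \<Rightarrow> real ^ 'm \<Rightarrow> real" where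
  "s2 K y = Inf {(norm (y - K *v x))\<^sup>2 | x. nonneg x}"

text \<open>Rust--Burrus interval [min h^T x, max h^T x] over the feasible set;
  min/max are taken as inf/sup in the extended reals (they coincide with
  min/max whenever these exist).\<close>
definition RB_interval ::
  "real ^ 'p ^ 'm \<Rightarrow> real ^ 'p \<Rightarrow> real \<Rightarrow> real ^ 'm \<Rightarrow> real set" where
  "RB_interval K h \<alpha> y =
     (let F = {x. nonneg x \<and> (norm (y - K *v x))\<^sup>2 \<le> (z_upper (\<alpha>/2))\<^sup>2 + s2 K y}
      in {t. (INF x\<in>F. ereal (h \<bullet> x)) \<le> ereal t \<and> ereal t \<le> (SUP x\<in>F. ereal (h \<bullet> x))})"

definition lambda_stat ::
  "real ^ 'p ^ 'm \<Rightarrow> real ^ 'p \<Rightarrow> real \<Rightarrow> real ^ 'm \<Rightarrow> real" where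
  "lambda_stat K h t y =
     Inf {(norm (y - K *v x))\<^sup>2 | x. h \<bullet> x = t \<and> nonneg x} - s2 K y"

definition stoch_dominates :: "real measure \<Rightarrow> real measure \<Rightarrow> bool" where
  "stoch_dominates PX PY \<longleftrightarrow> (\<forall>z. measure PX {z<..} \<ge> measure PY {z<..})"

end

theory Submission imports Defs begin

lemma orthant_hull:
  "{x::real^'p. nonneg x} = convex_cone hull (range (\<lambda>i. axis i 1))"
proof
  show "convex_cone hull (range (\<lambda>i. axis i 1)) \<subseteq> {x::real^'p. nonneg x}"
  proof (rule hull_minimal)
    show "range (\<lambda>i. axis i 1) \<subseteq> {x::real^'p. nonneg x}"
      by (auto simp: nonneg_def axis_def)
    show "convex_cone {x::real^'p. nonneg x}"
      unfolding convex_cone_def conic_def convex_def nonneg_def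
      by (auto intro!: exI[of _ 0] add_nonneg_nonneg)
  qed
next
  show "{x::real^'p. nonneg x} \<subseteq> convex_cone hull (range (\<lambda>i. axis i 1))"
  proof
    fix x :: "real^'p" assume "x \<in> {x. nonneg x}"
    hence nn: "\<And>i. 0 \<le> x $ i" by (simp add: nonneg_def)
    have "\<And>I. (\<Sum>i\<in>I. x $ i *\<^sub>R axis i 1) \<in> convex_cone hull (range (\<lambda>i. axis i (1::real)))"
    proof -
      fix I :: "'p set"
      show "(\<Sum>i\<in>I. x $ i *\<^sub>R axis i 1) \<in> convex_cone hull (range (\<lambda>i. axis i (1::real)))"
      proof (induction I rule: infinite_finite_induct)
        case (infinite A) then show ?case by (simp add: convex_cone_hull_contains_0)
      next
        case empty then show ?case by (simp add: convex_cone_hull_contains_0)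
      next
        case (insert a A)
        have "axis a 1 \<in> convex_cone hull (range (\<lambda>i. axis i (1::real)))"
          by (simp add: hull_inc)
        hence "x $ a *\<^sub>R axis a 1 \<in> convex_cone hull (range (\<lambda>i. axis i (1::real)))"
          using nn by (simp add: convex_cone_hull_mul)
        then show ?case using insert by (simp add: convex_cone_hull_add)
      qed
    qed
    moreover have "x = (\<Sum>i\<in>UNIV. x $ i *\<^sub>R axis i 1)"
      by (simp add: vec_eq_iff axis_def sum.delta if_distrib cong: if_cong)
    ultimately show "x \<in> convex_cone hull (range (\<lambda>i. axis i 1))" by metis
  qed
qed

lemma closed_linear_orthant:
  fixes f :: "real^'p \<Rightarrow> 'b::euclidean_space"
  assumes "linear f"
  shows "closed (f ` {x. nonneg x})"
  unfolding orthant_hull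
  by (metis assms closed_convex_cone_hull convex_cone_hull_linear_image finite finite_imageI)


lemma inf_sq_attained:
  fixes D :: "'a::euclidean_space set"
  assumes "closed D" "D \<noteq> {}"
  shows "Inf ((\<lambda>w. (norm (y - w))\<^sup>2) ` D) = (infdist y D)\<^sup>2"
    and "\<exists>w\<in>D. (norm (y - w))\<^sup>2 = (infdist y D)\<^sup>2"
proof -
  obtain w0 where w0: "w0 \<in> D" "infdist y D = dist y w0"
    using infdist_attains_inf[OF assms] by blast
  have le: "(infdist y D)\<^sup>2 \<le> (norm (y - w))\<^sup>2" if "w \<in> D" for w
  proof -
    have "infdist y D \<le> norm (y - w)" using infdist_le[OF that, of y] by (simp add: dist_norm)
    from power_mono[OF this infdist_nonneg, of 2] show ?thesis .
  qed
  show "\<exists>w\<in>D. (norm (y - w))\<^sup>2 = (infdist y D)\<^sup>2"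
    using w0 by (auto simp: dist_norm)
  show "Inf ((\<lambda>w. (norm (y - w))\<^sup>2) ` D) = (infdist y D)\<^sup>2"
    by (rule cInf_eq_minimum) (use w0 le in \<open>auto simp: dist_norm\<close>)
qed

definition AA :: "real ^ 'p ^ 'm \<Rightarrow> real ^ 'p \<Rightarrow> real ^ 'p \<Rightarrow> (real ^ 'm) \<times> real" where
  "AA K h x = (K *v x, h \<bullet> x)"

lemma linear_AA: "linear (AA K h)"
  unfolding AA_def
  by (rule linearI) (auto simp: matrix_vector_right_distrib inner_add_right
      matrix_vector_mult_scaleR)

definition CC where "CC K h = AA K h ` {x. nonneg x}"

lemma closed_CC: "closed (CC K h)"
  unfolding CC_def by (rule closed_linear_orthant[OF linear_AA])

definition Dsl where "Dsl K h t = {w. (w, t) \<in> CC K h}"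

lemma closed_Dsl:
  fixes K :: "real ^ 'p ^ 'm"
  shows "closed (Dsl K h t)"
proof -
  have "closed ((\<lambda>w::real^'m. (w, t)) -` CC K h)"
    by (rule closed_vimage[OF closed_CC]) (simp add: continuous_on_Pair continuous_on_id continuous_on_const)
  thus ?thesis unfolding Dsl_def vimage_def by simp
qed

lemma Dsl_eq: "Dsl K h t = (\<lambda>x. K *v x) ` {x. h \<bullet> x = t \<and> nonneg x}"
  unfolding Dsl_def CC_def AA_def by auto

definition D0 where "D0 K = (\<lambda>x. K *v x) ` {x. nonneg x}"

lemma closed_D0: "closed (D0 K)"
  unfolding D0_def by (rule closed_linear_orthant) (simp add: matrix_vector_mul_linear)

lemma D0_ne: "D0 K \<noteq> {}"
proof -
  have "nonneg (0::real^'p)" by (simp add: nonneg_def)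
  thus ?thesis unfolding D0_def by blast
qed

lemma s2_eq: "s2 K y = (infdist y (D0 K))\<^sup>2"
proof -
  have "{(norm (y - K *v x))\<^sup>2 | x. nonneg x} = (\<lambda>w. (norm (y - w))\<^sup>2) ` D0 K"
    unfolding D0_def by auto
  thus ?thesis unfolding s2_def using inf_sq_attained(1)[OF closed_D0 D0_ne] by simp
qed

lemma slice_eq: "{(norm (y - K *v x))\<^sup>2 | x. h \<bullet> x = t \<and> nonneg x} = (\<lambda>w. (norm (y - w))\<^sup>2) ` Dsl K h t"
  unfolding Dsl_eq by auto

lemma lambda_eq:
  assumes "nonneg xs"
  shows "lambda_stat K h (h \<bullet> xs) y = (infdist y (Dsl K h (h \<bullet> xs)))\<^sup>2 - (infdist y (D0 K))\<^sup>2"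
proof -
  have ne: "Dsl K h (h \<bullet> xs) \<noteq> {}" using assms unfolding Dsl_eq by blast
  show ?thesis unfolding lambda_stat_def slice_eq s2_eq
    using inf_sq_attained(1)[OF closed_Dsl ne] by simp
qed

lemma lambda_cont:
  assumes "nonneg xs"
  shows "continuous_on UNIV (lambda_stat K h (h \<bullet> xs))"
  unfolding lambda_eq[OF assms, abs_def] by (intro continuous_intros)



lemma closed_snd_image:
  fixes G :: "('a::euclidean_space \<times> 'b::euclidean_space) set"
  assumes cG: "closed G" and bG: "bounded (fst ` G)"
  shows "closed (snd ` G)"
  unfolding closed_sequential_limits
proof (intro allI impI, elim conjE)
  fix s l assume s: "\<forall>n. s n \<in> snd ` G" and lim: "s \<longlonglongrightarrow> l"
  have "\<forall>n. \<exists>p. p \<in> G \<and> snd p = s n" using s by (metis imageE)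
  then obtain g where g: "\<And>n. g n \<in> G" "\<And>n. snd (g n) = s n" by metis
  obtain B1 where B1: "\<forall>w\<in>fst ` G. norm w \<le> B1" using bG by (auto simp: bounded_iff)
  obtain B2 where B2: "\<forall>w\<in>range s. norm w \<le> B2"
    using convergent_imp_bounded[OF lim] by (auto simp: bounded_iff)
  define H where "H = (cball 0 B1 \<times> cball 0 B2) \<inter> G"
  have "compact H" unfolding H_def
    by (intro compact_Int_closed compact_Times compact_cball cG)
  hence sH: "seq_compact H" by (rule compact_imp_seq_compact)
  have gH: "\<forall>n. g n \<in> H"
  proof
    fix n
    have "fst (g n) \<in> fst ` G" using g(1) by blast
    hence "norm (fst (g n)) \<le> B1" using B1 by blast
    moreover have "norm (snd (g n)) \<le> B2" using B2 g(2) by auto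
    moreover have "g n \<in> G" using g(1) by blast
    ultimately show "g n \<in> H" unfolding H_def
      by (auto simp: mem_cball dist_norm mem_Times_iff)
  qed
  obtain p r where p: "p \<in> H" "strict_mono r" "(g \<circ> r) \<longlonglongrightarrow> p"
    using seq_compactE[OF sH gH] by blast
  have "(\<lambda>n. snd ((g \<circ> r) n)) \<longlonglongrightarrow> snd p" by (intro tendsto_snd p(3))
  moreover have "(\<lambda>n. snd ((g \<circ> r) n)) = s \<circ> r" using g(2) by auto
  moreover have "(s \<circ> r) \<longlonglongrightarrow> l" by (rule LIMSEQ_subseq_LIMSEQ[OF lim p(2)])
  ultimately have "snd p = l" using LIMSEQ_unique by metis
  moreover have "p \<in> G" using p(1) H_def by blast
  ultimately show "l \<in> snd ` G" by blast
qed

lemma real_in_closed_interval: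
  fixes T :: "real set"
  assumes cT: "closed T" and iT: "is_interval T" and ne: "T \<noteq> {}"
    and lo: "(INF s\<in>T. ereal s) \<le> ereal t" and hi: "ereal t \<le> (SUP s\<in>T. ereal s)"
  shows "t \<in> T"
proof (rule ccontr)
  assume nt: "t \<notin> T"
  have side: "(\<forall>s\<in>T. s < t) \<or> (\<forall>s\<in>T. t < s)"
  proof (rule ccontr)
    assume "\<not> ?thesis"
    then obtain a b where "a \<in> T" "b \<in> T" "\<not> a < t" "\<not> t < b" by blast
    hence "b \<le> t" "t \<le> a" by auto
    with \<open>a \<in> T\<close> \<open>b \<in> T\<close> iT have "t \<in> T" unfolding is_interval_1 by blast
    with nt show False by blast
  qed
  then show False
  proof
    assume lt: "\<forall>s\<in>T. s < t"
    hence bd: "bdd_above T" by (meson bdd_aboveI less_imp_le)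
    have "Sup T \<in> T" by (rule closed_contains_Sup[OF ne bd cT])
    hence "Sup T < t" using lt by blast
    moreover have "(SUP s\<in>T. ereal s) \<le> ereal (Sup T)"
      by (rule SUP_least) (simp add: cSup_upper bd)
    ultimately show False using hi by (meson ereal_less_eq(3) linorder_not_le order.trans)
  next
    assume gt: "\<forall>s\<in>T. t < s"
    hence bd: "bdd_below T" by (meson bdd_belowI less_imp_le)
    have "Inf T \<in> T" by (rule closed_contains_Inf[OF ne bd cT])
    hence "t < Inf T" using gt by blast
    moreover have "ereal (Inf T) \<le> (INF s\<in>T. ereal s)"
      by (rule INF_greatest) (simp add: cInf_lower bd)
    ultimately show False using lo by (meson ereal_less_eq(3) linorder_not_le order.trans)
  qed
qed



lemma sq_le_iff_norm_le:
  assumes "0 \<le> c"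
  shows "(norm (v::'a::real_normed_vector))\<^sup>2 \<le> c \<longleftrightarrow> norm v \<le> sqrt c"
proof -
  have "norm v = sqrt ((norm v)\<^sup>2)" by simp
  thus ?thesis by (metis real_sqrt_le_iff)
qed

lemma convex_F:
  fixes K :: "real ^ 'p ^ 'm"
  shows "convex {x. nonneg x \<and> (norm (y - K *v x))\<^sup>2 \<le> c}"
proof (cases "0 \<le> c")
  case False
  hence "{x. nonneg x \<and> (norm (y - K *v x))\<^sup>2 \<le> c} = {}"
    by (auto intro: order.trans[OF zero_le_power2])
  thus ?thesis by (metis convex_empty)
next
  case True
  have eq: "{x. nonneg x \<and> (norm (y - K *v x))\<^sup>2 \<le> c} = {x. nonneg x \<and> norm (y - K *v x) \<le> sqrt c}"
    using sq_le_iff_norm_le[OF True] by blast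
  show ?thesis unfolding eq convex_def
  proof (intro ballI allI impI, simp only: mem_Collect_eq, elim conjE, intro conjI)
    fix x1 x2 :: "real^'p" and u v :: real
    assume h: "nonneg x1" "norm (y - K *v x1) \<le> sqrt c" "nonneg x2" "norm (y - K *v x2) \<le> sqrt c"
      "0 \<le> u" "0 \<le> v" "u + v = 1"
    show "nonneg (u *\<^sub>R x1 + v *\<^sub>R x2)" using h by (simp add: nonneg_def)
    have "y - K *v (u *\<^sub>R x1 + v *\<^sub>R x2) = u *\<^sub>R (y - K *v x1) + v *\<^sub>R (y - K *v x2)"
      using h(7) by (simp add: matrix_vector_right_distrib matrix_vector_mult_scaleR algebra_simps
          flip: scaleR_add_left)
    hence "norm (y - K *v (u *\<^sub>R x1 + v *\<^sub>R x2)) \<le> u * norm (y - K *v x1) + v * norm (y - K *v x2)"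
      using h(5,6) by (metis (no_types) abs_of_nonneg norm_scaleR norm_triangle_ineq)
    also have "\<dots> \<le> u * sqrt c + v * sqrt c"
      using h by (intro add_mono mult_left_mono) auto
    also have "\<dots> = sqrt c" using h(7) by (metis distrib_right mult_1)
    finally show "norm (y - K *v (u *\<^sub>R x1 + v *\<^sub>R x2)) \<le> sqrt c" .
  qed
qed

lemma RB_iff:
  fixes K :: "real ^ 'p ^ 'm"
  assumes xs: "nonneg xs"
  shows "(h \<bullet> xs \<in> RB_interval K h \<alpha> y) \<longleftrightarrow> lambda_stat K h (h \<bullet> xs) y \<le> (z_upper (\<alpha>/2))\<^sup>2"
proof -
  define t where "t = h \<bullet> xs"
  define c where "c = (z_upper (\<alpha>/2))\<^sup>2 + s2 K y"
  define F where "F = {x. nonneg x \<and> (norm (y - K *v x))\<^sup>2 \<le> c}"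
  define Sl where "Sl = {(norm (y - K *v x))\<^sup>2 | x. h \<bullet> x = t \<and> nonneg x}"
  have lam: "lambda_stat K h t y = Inf Sl - s2 K y" unfolding lambda_stat_def Sl_def ..
  have ne: "Dsl K h t \<noteq> {}" using xs unfolding Dsl_eq t_def by blast
  obtain w where w: "w \<in> Dsl K h t" "(norm (y - w))\<^sup>2 = (infdist y (Dsl K h t))\<^sup>2"
    using inf_sq_attained(2)[OF closed_Dsl ne] by blast
  obtain x1 where x1: "nonneg x1" "h \<bullet> x1 = t" "w = K *v x1" using w(1) unfolding Dsl_eq by blast
  have infSl: "Inf Sl = (infdist y (Dsl K h t))\<^sup>2"
    unfolding Sl_def slice_eq using inf_sq_attained(1)[OF closed_Dsl ne] .
  have Sl_lower: "Inf Sl \<le> (norm (y - K *v x))\<^sup>2" if "nonneg x" "h \<bullet> x = t" for x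
  proof (rule cInf_lower)
    show "(norm (y - K *v x))\<^sup>2 \<in> Sl" unfolding Sl_def using that by blast
    show "bdd_below Sl" unfolding Sl_def by (rule bdd_belowI[of _ 0]) auto
  qed
  have RB: "RB_interval K h \<alpha> y = {s. (INF x\<in>F. ereal (h \<bullet> x)) \<le> ereal s \<and> ereal s \<le> (SUP x\<in>F. ereal (h \<bullet> x))}"
    unfolding RB_interval_def F_def c_def Let_def ..
  show ?thesis
    unfolding t_def[symmetric]
  proof
    assume "t \<in> RB_interval K h \<alpha> y"
    hence lo: "(INF x\<in>F. ereal (h \<bullet> x)) \<le> ereal t" and hi: "ereal t \<le> (SUP x\<in>F. ereal (h \<bullet> x))"
      unfolding RB by auto
    define T where "T = (\<lambda>x. h \<bullet> x) ` F"
    have FT: "(INF x\<in>F. ereal (h \<bullet> x)) = (INF s\<in>T. ereal s)" "(SUP x\<in>F. ereal (h \<bullet> x)) = (SUP s\<in>T. ereal s)"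
      unfolding T_def by (simp_all add: image_comp o_def)
    have Fne: "F \<noteq> {}"
    proof
      assume "F = {}"
      with lo show False by (simp add: top_ereal_def)
    qed
    define G where "G = CC K h \<inter> {p. (norm (y - fst p))\<^sup>2 \<le> c}"
    have TG: "T = snd ` G"
    proof
      show "T \<subseteq> snd ` G"
      proof
        fix s assume "s \<in> T"
        then obtain x where "x \<in> F" "s = h \<bullet> x" unfolding T_def by blast
        hence "AA K h x \<in> G" "snd (AA K h x) = s"
          unfolding G_def CC_def F_def by (auto simp: AA_def)
        thus "s \<in> snd ` G" by (metis image_eqI)
      qed
      show "snd ` G \<subseteq> T"
      proof
        fix s assume "s \<in> snd ` G"
        then obtain p where p: "p \<in> G" "s = snd p" by blast
        then obtain x where "nonneg x" "p = AA K h x" unfolding G_def CC_def by blast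
        hence "x \<in> F" "s = h \<bullet> x" using p unfolding G_def F_def by (auto simp: AA_def)
        thus "s \<in> T" unfolding T_def by blast
      qed
    qed
    have cG: "closed G" unfolding G_def
      by (intro closed_Int closed_CC closed_Collect_le continuous_intros)
    have "fst ` G \<subseteq> cball y (sqrt c)"
      unfolding G_def by (auto simp: dist_norm intro: real_le_rsqrt)
    hence bG: "bounded (fst ` G)" by (rule bounded_subset[OF bounded_cball])
    have cT: "closed T" unfolding TG by (rule closed_snd_image[OF cG bG])
    have iT: "is_interval T" unfolding is_interval_convex_1 T_def F_def
      by (rule convex_linear_image[OF _ convex_F]) (rule bounded_linear.linear[OF bounded_linear_inner_right])
    have "t \<in> T" by (rule real_in_closed_interval[OF cT iT]) (use Fne lo hi FT T_def in auto)
    then obtain x where x: "x \<in> F" "h \<bullet> x = t" unfolding T_def by blast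
    hence "Inf Sl \<le> c" using Sl_lower[of x] unfolding F_def by auto
    thus "lambda_stat K h t y \<le> (z_upper (\<alpha>/2))\<^sup>2" unfolding lam c_def by simp
  next
    assume "lambda_stat K h t y \<le> (z_upper (\<alpha>/2))\<^sup>2"
    hence "Inf Sl \<le> c" unfolding lam c_def by simp
    hence "x1 \<in> F" using x1 w(2) infSl unfolding F_def by simp
    hence "(INF x\<in>F. ereal (h \<bullet> x)) \<le> ereal t" "ereal t \<le> (SUP x\<in>F. ereal (h \<bullet> x))"
      using x1(2) by (metis INF_lower, metis SUP_upper)
    thus "t \<in> RB_interval K h \<alpha> y" unfolding RB by simp
  qed
qed



lemma nn_integral_shift_normal:
  "(\<integral>\<^sup>+x. ennreal (std_normal_density (x - c)) \<partial>lborel) = 1"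
proof -
  interpret prob_space "density lborel (normal_density c 1)" by (rule prob_space_normal_density) simp
  have "emeasure (density lborel (normal_density c 1)) UNIV = 1"
    using emeasure_space_1 by simp
  hence "(\<integral>\<^sup>+x. ennreal (normal_density c 1 x) \<partial>lborel) = 1"
    by (simp add: emeasure_density)
  moreover have "\<And>x. normal_density c 1 x = std_normal_density (x - c)"
    by (simp add: normal_density_def)
  ultimately show ?thesis by simp
qed

lemma Basis_vec_real: "(Basis :: (real^'m) set) = range (\<lambda>i. axis i 1)"
  by (auto simp: Basis_vec_def)

lemma prob_space_gaussian_id: "prob_space (gaussian_id (mu :: real^'m))"
proof
  let ?f = "\<lambda>(b::real^'m) x. ennreal (std_normal_density (x - mu \<bullet> b))"
  have inj: "inj (\<lambda>i::'m. axis i (1::real))" by (auto simp: inj_on_def axis_eq_axis)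
  have eq: "ennreal (\<Prod>i\<in>UNIV. std_normal_density (y $ i - mu $ i)) = (\<Prod>b\<in>Basis. ?f b (y \<bullet> b))" for y :: "real^'m"
  proof -
    have "(\<Prod>b\<in>Basis. ?f b (y \<bullet> b)) = (\<Prod>i\<in>UNIV. ?f (axis i 1) (y \<bullet> axis i 1))"
      unfolding Basis_vec_real by (rule prod.reindex[OF inj, unfolded comp_def])
    also have "\<dots> = (\<Prod>i\<in>UNIV. ennreal (std_normal_density (y $ i - mu $ i)))"
      by (simp add: inner_axis)
    also have "\<dots> = ennreal (\<Prod>i\<in>UNIV. std_normal_density (y $ i - mu $ i))"
      by (rule prod_ennreal) (simp add: normal_density_nonneg)
    finally show ?thesis by simp
  qed
  have "emeasure (gaussian_id mu) (space (gaussian_id mu)) =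
      (\<integral>\<^sup>+y. ennreal (\<Prod>i\<in>UNIV. std_normal_density (y $ i - mu $ i)) \<partial>lborel)"
    unfolding gaussian_id_def by (simp add: emeasure_density)
  also have "\<dots> = (\<integral>\<^sup>+y. (\<Prod>b\<in>Basis. ?f b (y \<bullet> b)) \<partial>lborel)"
    by (simp only: eq)
  also have "\<dots> = (\<Prod>b\<in>Basis. (\<integral>\<^sup>+x. ?f b x \<partial>lborel))"
    by (rule nn_integral_lborel_prod) auto
  also have "\<dots> = 1" by (simp add: nn_integral_shift_normal)
  finally show "emeasure (gaussian_id mu) (space (gaussian_id mu)) = 1" .
qed



lemma prob_space_std_normal: "prob_space std_normal"
  unfolding std_normal_def using prob_space_normal_density[of 1 0] by simp

interpretation N: prob_space std_normal by (rule prob_space_std_normal)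

lemma sets_std_normal[simp, measurable_cong]: "sets std_normal = sets borel"
  by (simp add: std_normal_def)

lemma space_std_normal[simp]: "space std_normal = UNIV"
  by (simp add: std_normal_def)

lemma emeasure_std_normal:
  assumes "A \<in> sets borel"
  shows "emeasure std_normal A = (\<integral>\<^sup>+x. ennreal (std_normal_density x) * indicator A x \<partial>lborel)"
  unfolding std_normal_def using assms by (simp add: emeasure_density)

lemma std_normal_density_le1: "std_normal_density x \<le> 1"
proof -
  have "1 \<le> sqrt (2 * pi)" using pi_gt3 by (simp add: real_le_rsqrt)
  hence "1 / sqrt (2 * pi) \<le> 1" by simp
  moreover have "exp (- x\<^sup>2 / 2) \<le> 1" by simp
  ultimately show ?thesis unfolding std_normal_density_def
    by (intro mult_le_one) auto
qed

lemma measure_Ioc_le: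
  assumes "a \<le> b"
  shows "measure std_normal {a<..b} \<le> b - a"
proof -
  have "emeasure std_normal {a<..b} = (\<integral>\<^sup>+x. ennreal (std_normal_density x) * indicator {a<..b} x \<partial>lborel)"
    by (rule emeasure_std_normal) simp
  also have "\<dots> \<le> (\<integral>\<^sup>+x. indicator {a<..b} x \<partial>lborel)"
    by (intro nn_integral_mono) (auto simp: indicator_def std_normal_density_le1)
  also have "\<dots> = ennreal (b - a)" using assms by simp
  finally have "emeasure std_normal {a<..b} \<le> ennreal (b - a)" .
  thus ?thesis using assms by (simp add: N.emeasure_eq_measure)
qed

lemma measure_Ioc_pos:
  assumes "a < b"
  shows "0 < measure std_normal {a<..b}"
proof -
  define m where "m = std_normal_density (\<bar>a\<bar> + \<bar>b\<bar>)"
  have m: "0 < m" unfolding m_def by (simp add: normal_density_pos)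
  have mle: "m \<le> std_normal_density x" if "x \<in> {a<..b}" for x
  proof -
    have "\<bar>x\<bar> \<le> \<bar>a\<bar> + \<bar>b\<bar>" using that by auto
    hence "x\<^sup>2 \<le> (\<bar>a\<bar> + \<bar>b\<bar>)\<^sup>2" by (metis abs_le_square_iff abs_of_nonneg abs_ge_zero add_nonneg_nonneg)
    hence "exp (- ((\<bar>a\<bar> + \<bar>b\<bar>)\<^sup>2 / 2)) \<le> exp (- (x\<^sup>2 / 2))" by simp
    thus ?thesis unfolding m_def std_normal_density_def
      by (simp add: divide_right_mono)
  qed
  have "ennreal (m * (b - a)) = (\<integral>\<^sup>+x. ennreal m * indicator {a<..b} x \<partial>lborel)"
    using assms m by (simp add: nn_integral_cmult ennreal_mult)
  also have "\<dots> \<le> (\<integral>\<^sup>+x. ennreal (std_normal_density x) * indicator {a<..b} x \<partial>lborel)"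
    by (intro nn_integral_mono) (auto simp: indicator_def mle)
  also have "\<dots> = emeasure std_normal {a<..b}"
    by (rule emeasure_std_normal[symmetric]) simp
  finally have "ennreal (m * (b - a)) \<le> ennreal (measure std_normal {a<..b})"
    by (simp add: N.emeasure_eq_measure)
  hence "m * (b - a) \<le> measure std_normal {a<..b}"
    by (simp add: ennreal_le_iff)
  moreover have "0 < m * (b - a)" using m assms by simp
  ultimately show ?thesis by linarith
qed

definition PN :: "real \<Rightarrow> real" where "PN z = measure std_normal {z<..}"

lemma PN_diff:
  assumes "a \<le> b"
  shows "PN a - PN b = measure std_normal {a<..b}"
proof -
  have eq: "{a<..} = {a<..b} \<union> {b<..}" using assms by auto
  have "PN a = measure std_normal ({a<..b} \<union> {b<..})" unfolding PN_def using eq by simp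
  also have "\<dots> = measure std_normal {a<..b} + PN b" unfolding PN_def
    by (rule N.finite_measure_Union) auto
  finally have "PN a = measure std_normal {a<..b} + PN b" .
  thus ?thesis by simp
qed

lemma PN_lipschitz: "\<bar>PN a - PN b\<bar> \<le> \<bar>a - b\<bar>"
proof (cases "a \<le> b")
  case True
  thus ?thesis using PN_diff[OF True] measure_Ioc_le[OF True] measure_nonneg[of std_normal "{a<..b}"] by (smt (verit))
next
  case False
  hence ba: "b \<le> a" by simp
  thus ?thesis using PN_diff[OF ba] measure_Ioc_le[OF ba] measure_nonneg[of std_normal "{b<..a}"] by (smt (verit))
qed

lemma PN_strict: "a < b \<Longrightarrow> PN b < PN a"
  using PN_diff[of a b] measure_Ioc_pos[of a b] by simp

lemma PN_cont: "continuous_on S PN"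
proof -
  have "1-lipschitz_on S PN" unfolding lipschitz_on_def
    using PN_lipschitz by (simp add: dist_real_def)
  thus ?thesis by (rule lipschitz_on_continuous_on)
qed

lemma measure_lessThan_neg: "measure std_normal {..< -a} = PN a"
proof -
  have "emeasure std_normal {..< -a} = (\<integral>\<^sup>+x. ennreal (std_normal_density x) * indicator {..< -a} x \<partial>lborel)"
    by (rule emeasure_std_normal) simp
  also have "\<dots> = ennreal \<bar>-1\<bar> * (\<integral>\<^sup>+x. ennreal (std_normal_density (0 + -1 * x)) * indicator {..< -a} (0 + -1 * x) \<partial>lborel)"
    by (rule nn_integral_real_affine) auto
  also have "\<dots> = (\<integral>\<^sup>+x. ennreal (std_normal_density x) * indicator {a<..} x \<partial>lborel)"
  proof -
    have "\<And>x. ennreal (std_normal_density (0 + -1 * x)) * indicator {..< -a} (0 + -1 * x) = ennreal (std_normal_density x) * indicator {a<..} x"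
      by (auto simp: std_normal_density_def indicator_def)
    thus ?thesis by simp
  qed
  also have "\<dots> = emeasure std_normal {a<..}"
    by (rule emeasure_std_normal[symmetric]) simp
  finally show ?thesis unfolding PN_def by (simp add: N.emeasure_eq_measure)
qed

lemma measure_singleton0: "measure std_normal {0} = 0"
proof -
  have "measure std_normal {0} \<le> e" if "e > 0" for e
  proof -
    have "measure std_normal {0} \<le> measure std_normal {-e<..0}"
      by (rule N.finite_measure_mono) (use that in auto)
    also have "\<dots> \<le> 0 - (-e)" by (rule measure_Ioc_le) (use that in auto)
    finally show ?thesis by simp
  qed
  hence "measure std_normal {0} \<le> 0" by (meson dense not_le)
  thus ?thesis using measure_nonneg[of std_normal "{0}"] by linarith
qed

lemma PN_0: "PN 0 = 1/2"
proof -
  have "UNIV = ({0<..} \<union> {..<0}) \<union> {0::real}" by auto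
  hence "1 = measure std_normal (({0<..} \<union> {..<0}) \<union> {0::real})"
    using N.prob_space by simp
  also have "\<dots> = measure std_normal {0<..} + measure std_normal {..<0} + measure std_normal {0}"
    by (subst N.finite_measure_Union; simp; subst N.finite_measure_Union; auto)
  also have "\<dots> = PN 0 + PN 0"
    using measure_lessThan_neg[of 0] measure_singleton0 unfolding PN_def by simp
  finally show ?thesis by simp
qed

lemma chi_tail_nonneg:
  assumes "0 \<le> r"
  shows "measure chi_sq_1 {r\<^sup>2<..} = 2 * PN r"
proof -
  have "measure chi_sq_1 {r\<^sup>2<..} = measure std_normal ((\<lambda>x. x\<^sup>2) -` {r\<^sup>2<..})"
    unfolding chi_sq_1_def by (subst measure_distr) auto
  also have "(\<lambda>x::real. x\<^sup>2) -` {r\<^sup>2<..} = {r<..} \<union> {..< -r}"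
  proof -
    have iff: "r\<^sup>2 < x\<^sup>2 \<longleftrightarrow> r < \<bar>x\<bar>" for x
      by (metis abs_le_square_iff abs_of_nonneg assms not_le)
    show ?thesis by (rule set_eqI) (simp add: iff, arith)
  qed
  also have "measure std_normal ({r<..} \<union> {..< -r}) = measure std_normal {r<..} + measure std_normal {..< -r}"
    by (rule N.finite_measure_Union) (use assms in auto)
  also have "\<dots> = PN r + PN r" using measure_lessThan_neg[of r] unfolding PN_def by simp
  finally show ?thesis by simp
qed

lemma chi_tail_neg:
  assumes "z < 0"
  shows "measure chi_sq_1 {z<..} = 1"
proof -
  have "measure chi_sq_1 {z<..} = measure std_normal ((\<lambda>x. x\<^sup>2) -` {z<..})"
    unfolding chi_sq_1_def by (subst measure_distr) auto
  also have "(\<lambda>x::real. x\<^sup>2) -` {z<..} = UNIV"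
    using assms by (auto intro: less_le_trans[OF _ zero_le_power2])
  finally show ?thesis using N.prob_space by simp
qed



lemma PN_tendsto: "(\<lambda>n. PN (real n)) \<longlonglongrightarrow> 0"
proof -
  have "(\<lambda>n. measure std_normal {real n<..}) \<longlonglongrightarrow> measure std_normal (\<Inter>n. {real n<..})"
    by (rule N.finite_Lim_measure_decseq) (auto simp: decseq_def)
  moreover have "(\<Inter>n. {real n<..}) = {}"
  proof -
    have "x \<notin> (\<Inter>n. {real n<..})" for x :: real
    proof -
      obtain n where "x < real n" using reals_Archimedean2 by blast
      thus ?thesis by (auto intro!: exI[of _ n])
    qed
    thus ?thesis by blast
  qed
  ultimately show ?thesis unfolding PN_def by simp
qed

lemma PN_pos: "0 < PN r"
proof -
  have "PN (r + 1) < PN r" by (rule PN_strict) simp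
  moreover have "0 \<le> PN (r + 1)" unfolding PN_def by (rule measure_nonneg)
  ultimately show ?thesis by linarith
qed

lemma z_upper_eq:
  assumes "PN r = a"
  shows "z_upper a = r"
  unfolding z_upper_def
proof (rule the_equality)
  show "measure std_normal {r<..} = a" using assms unfolding PN_def .
  fix w assume "measure std_normal {w<..} = a"
  hence "PN w = PN r" using assms unfolding PN_def by simp
  thus "w = r" using PN_strict[of w r] PN_strict[of r w] by (cases w r rule: linorder_cases) auto
qed

lemma z_upper_props:
  assumes "0 < a" "a < 1/2"
  shows "PN (z_upper a) = a" "0 \<le> z_upper a"
proof -
  obtain n where n: "PN (real n) < a"
    using order_tendstoD(2)[OF PN_tendsto assms(1)] by (auto simp: eventually_sequentially)
  have "\<exists>x. 0 \<le> x \<and> x \<le> real n \<and> PN x = a"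
    by (rule IVT2') (use n PN_0 assms PN_cont in auto)
  then obtain x where x: "0 \<le> x" "PN x = a" by blast
  have "z_upper a = x" by (rule z_upper_eq[OF x(2)])
  thus "PN (z_upper a) = a" "0 \<le> z_upper a" using x by auto
qed

lemma sets_gaussian_id[simp, measurable_cong]: "sets (gaussian_id mu) = sets borel"
  by (simp add: gaussian_id_def)

lemma space_gaussian_id[simp]: "space (gaussian_id mu) = UNIV"
  by (simp add: gaussian_id_def)

theorem lemma4p3:
  fixes K :: "real ^ 'p ^ 'm" and h :: "real ^ 'p" and xstar :: "real ^ 'p"
  assumes "nonneg xstar"
  shows "(\<forall>\<alpha>::real. 0 < \<alpha> \<and> \<alpha> < 1 \<longrightarrow>
            measure (gaussian_id (K *v xstar)) {y. h \<bullet> xstar \<in> RB_interval K h \<alpha> y} \<ge> 1 - \<alpha>)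
     \<longleftrightarrow> stoch_dominates chi_sq_1
            (distr (gaussian_id (K *v xstar)) borel (lambda_stat K h (h \<bullet> xstar)))"
proof -
  define M where "M = gaussian_id (K *v xstar)"
  define L where "L = lambda_stat K h (h \<bullet> xstar)"
  interpret G: prob_space M unfolding M_def by (rule prob_space_gaussian_id)
  have Lb: "L \<in> borel_measurable borel"
    unfolding L_def by (rule borel_measurable_continuous_onI[OF lambda_cont[OF assms]])
  have LM: "L \<in> borel_measurable M"
    using Lb unfolding M_def by (simp add: measurable_cong_sets[OF sets_gaussian_id refl])
  define Q where "Q z = measure M {y. z < L y}" for z
  have ev: "{y. z < L y} \<in> sets M" for z
  proof -
    have "{y. z < L y} = L -` {z<..} \<inter> space M" unfolding M_def by auto
    thus ?thesis using measurable_sets[OF LM, of "{z<..}"] by simp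
  qed
  have Qd: "measure (distr M borel L) {z<..} = Q z" for z
    unfolding Q_def using LM by (subst measure_distr) (auto simp: M_def vimage_def)
  have Ev: "measure M {y. h \<bullet> xstar \<in> RB_interval K h \<alpha> y} = 1 - Q ((z_upper (\<alpha>/2))\<^sup>2)" for \<alpha>
  proof -
    have "{y. h \<bullet> xstar \<in> RB_interval K h \<alpha> y} = space M - {y. (z_upper (\<alpha>/2))\<^sup>2 < L y}"
    proof (rule set_eqI)
      fix y
      show "y \<in> {y. h \<bullet> xstar \<in> RB_interval K h \<alpha> y} \<longleftrightarrow> y \<in> space M - {y. (z_upper (\<alpha>/2))\<^sup>2 < L y}"
        using RB_iff[OF assms, of h K \<alpha> y] unfolding L_def M_def by (simp add: not_less)
    qed
    thus ?thesis unfolding Q_def using G.prob_compl[OF ev] by simp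
  qed
  have LHS: "(\<forall>\<alpha>::real. 0 < \<alpha> \<and> \<alpha> < 1 \<longrightarrow> measure M {y. h \<bullet> xstar \<in> RB_interval K h \<alpha> y} \<ge> 1 - \<alpha>)
      \<longleftrightarrow> (\<forall>\<alpha>::real. 0 < \<alpha> \<and> \<alpha> < 1 \<longrightarrow> Q ((z_upper (\<alpha>/2))\<^sup>2) \<le> \<alpha>)"
    unfolding Ev by auto
  have RHS: "stoch_dominates chi_sq_1 (distr M borel L) \<longleftrightarrow> (\<forall>z. Q z \<le> measure chi_sq_1 {z<..})"
    unfolding stoch_dominates_def Qd ..
  have "(\<forall>\<alpha>::real. 0 < \<alpha> \<and> \<alpha> < 1 \<longrightarrow> Q ((z_upper (\<alpha>/2))\<^sup>2) \<le> \<alpha>) \<longleftrightarrow> (\<forall>z. Q z \<le> measure chi_sq_1 {z<..})"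
  proof
    assume H: "\<forall>\<alpha>::real. 0 < \<alpha> \<and> \<alpha> < 1 \<longrightarrow> Q ((z_upper (\<alpha>/2))\<^sup>2) \<le> \<alpha>"
    show "\<forall>z. Q z \<le> measure chi_sq_1 {z<..}"
    proof
      fix z :: real
      consider "z < 0" | "z = 0" | "0 < z" by linarith
      then show "Q z \<le> measure chi_sq_1 {z<..}"
      proof cases
        case 1
        thus ?thesis using chi_tail_neg[OF 1] unfolding Q_def by simp
      next
        case 2
        have "measure chi_sq_1 {z<..} = 2 * PN 0" using chi_tail_nonneg[of 0] 2 by simp
        thus ?thesis using PN_0 unfolding Q_def by simp
      next
        case 3
        define r where "r = sqrt z"
        have r: "0 < r" "r\<^sup>2 = z" using 3 unfolding r_def by auto
        have a1: "0 < PN r" by (rule PN_pos)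
        have a2: "PN r < 1/2" using PN_strict[OF r(1)] PN_0 by simp
        have zu: "z_upper ((2 * PN r)/2) = r" using z_upper_eq[of r "PN r"] by simp
        have "Q ((z_upper ((2 * PN r)/2))\<^sup>2) \<le> 2 * PN r"
          using spec[OF H, of "2 * PN r"] a1 a2 by linarith
        hence "Q z \<le> 2 * PN r" using zu r by simp
        thus ?thesis using chi_tail_nonneg[of r] r by simp
      qed
    qed
  next
    assume H: "\<forall>z. Q z \<le> measure chi_sq_1 {z<..}"
    show "\<forall>\<alpha>::real. 0 < \<alpha> \<and> \<alpha> < 1 \<longrightarrow> Q ((z_upper (\<alpha>/2))\<^sup>2) \<le> \<alpha>"
    proof (intro allI impI, elim conjE)
      fix \<alpha> :: real assume a: "0 < \<alpha>" "\<alpha> < 1"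
      have p: "PN (z_upper (\<alpha>/2)) = \<alpha>/2" "0 \<le> z_upper (\<alpha>/2)"
        using z_upper_props[of "\<alpha>/2"] a by auto
      have "Q ((z_upper (\<alpha>/2))\<^sup>2) \<le> measure chi_sq_1 {(z_upper (\<alpha>/2))\<^sup>2<..}" using H by blast
      also have "\<dots> = \<alpha>" using chi_tail_nonneg[OF p(2)] p(1) by simp
      finally show "Q ((z_upper (\<alpha>/2))\<^sup>2) \<le> \<alpha>" .
    qed
  qed
  thus ?thesis using LHS RHS unfolding M_def L_def by simp
qed

end
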